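(* Let $m>0$ be an even integer. If there exists a classical deterministic winning strategy for the matching game with parameter $m$, then there exist a graph $G=(V,E)$ with $|V|=m$ and a function $h:E\to\{0,1\}$ such that (1) there are at least $\dfrac{2^m}{2^{\lceil\log_2 m\rceil}}$ colourings of $G$ according to $h$, and (2) $G$ contains a connected component with more than $\frac{m}{2}$ vertices. (Equivalently: to show there is no classical deterministic winning strategy for parameter $m$, it suffices to show no such $G$ and $h$ exist.)
   Context: A perfect matching on $\{0,\ldots,m-1\}$ ($m$ even) is a partition of this set into $m/2$ sets of cardinality 2; $M_m$ denotes the set of all perfect matchings. Let $L=\lceil\log_2 m\rceil$. For $n\in\{0,\ldots,m-1\}$, $\bar n\in\{0,1\}^L$ is the $L$-bit binary representation of $n$, most significant bit first. On bit strings $\oplus$ is bitwise, and $u\cdot v=\bigoplus_i(u_i\wedge v_i)$. The matching game with parameter $m$: Alice receives $x\in\{0,1\}^m$ and outputs $a\in\{0,1\}^L$; Bob receives $y\in M_m$ and outputs a two-element set $\{b_1,b_2\}\subseteq\{0,\ldots,m-1\}$ and a string $b\in\{0,1\}^L$; they win on question $(x,y)$ iff $\{b_1,b_2\}\in y$ and $x_{b_1}\oplus x_{b_2}=(\bar b_1\oplus\bar b_2)\cdot(a\oplus b)$. A classical deterministic strategy is a pair of functions $s_A:\{0,1\}^m\to\{0,1\}^L$ and $s_B:M_m\to\{\text{two-element subsets of }\{0,\ldots,m-1\}\}\times\{0,1\}^L$; it is winning if $(s_A(x),s_B(y))$ wins on every question $(x,y)\in\{0,1\}^m\times M_m$. Given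 a graph $G=(V,E)$ and $h:E\to\{0,1\}$, a colouring of $G$ according to $h$ is a function $c:V\to\{0,1\}$ with $c(u)\oplus c(v)=h(\{u,v\})$ for every edge $\{u,v\}\in E$. A connected component is a nonempty maximal connected induced subgraph. *)

theory Defs
  imports Complex_Main "HOL-Library.FuncSet"
begin

text \<open>Bit strings are boolean lists (True = 1).\<close>

definition Lbits :: "nat \<Rightarrow> nat" where
  "Lbits m = nat \<lceil>log 2 (real m)\<rceil>"

definition bin :: "nat \<Rightarrow> nat \<Rightarrow> bool list" where
  "bin L n = map (\<lambda>i. odd (n div 2 ^ (L - 1 - i))) [0..<L]"

definition xorl :: "bool list \<Rightarrow> bool list \<Rightarrow> bool list" where
  "xorl u v = map2 (\<lambda>p q. p \<noteq> q) u v"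

definition dotp :: "bool list \<Rightarrow> bool list \<Rightarrow> bool" where
  "dotp u v = foldr (\<lambda>p q. p \<noteq> q) (map2 (\<and>) u v) False"

definition perfect_matching :: "nat \<Rightarrow> nat set set \<Rightarrow> bool" where
  "perfect_matching m y \<longleftrightarrow>
     (\<forall>e\<in>y. card e = 2) \<and> \<Union>y = {0..<m} \<and>
     (\<forall>e\<in>y. \<forall>e'\<in>y. e \<noteq> e' \<longrightarrow> e \<inter> e' = {})"

definition wins :: "nat \<Rightarrow> bool list \<Rightarrow> nat set set \<Rightarrow> bool list \<Rightarrow> nat set \<times> bool list \<Rightarrow> bool" where
  "wins m x y a eb \<longleftrightarrow> fst eb \<in> y \<and>
     (\<exists>b1 b2. b1 \<noteq> b2 \<and> fst eb = {b1, b2} \<and>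
        ((x ! b1 \<noteq> x ! b2) = dotp (xorl (bin (Lbits m) b1) (bin (Lbits m) b2)) (xorl a (snd eb))))"

definition classical_winning_strategy_exists :: "nat \<Rightarrow> bool" where
  "classical_winning_strategy_exists m \<longleftrightarrow>
    (\<exists>(sA :: bool list \<Rightarrow> bool list) (sB :: nat set set \<Rightarrow> nat set \<times> bool list).
       (\<forall>x. length x = m \<longrightarrow> length (sA x) = Lbits m) \<and>
       (\<forall>y. perfect_matching m y \<longrightarrow>
           card (fst (sB y)) = 2 \<and> fst (sB y) \<subseteq> {0..<m} \<and> length (snd (sB y)) = Lbits m) \<and>
       (\<forall>x y. length x = m \<longrightarrow> perfect_matching m y \<longrightarrow> wins m x y (sA x) (sB y)))"

definition graph :: "'a set \<Rightarrow> 'a set set \<Rightarrow> bool" where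
  "graph V E \<longleftrightarrow> finite V \<and> (\<forall>e\<in>E. e \<subseteq> V \<and> card e = 2)"

definition colouring :: "'a set \<Rightarrow> 'a set set \<Rightarrow> ('a set \<Rightarrow> bool) \<Rightarrow> ('a \<Rightarrow> bool) \<Rightarrow> bool" where
  "colouring V E h c \<longleftrightarrow> (\<forall>u v. {u, v} \<in> E \<longrightarrow> (c u \<noteq> c v) = h {u, v})"

definition colourings :: "'a set \<Rightarrow> 'a set set \<Rightarrow> ('a set \<Rightarrow> bool) \<Rightarrow> ('a \<Rightarrow> bool) set" where
  "colourings V E h = {c \<in> V \<rightarrow>\<^sub>E (UNIV :: bool set). colouring V E h c}"

definition induced_connected :: "'a set set \<Rightarrow> 'a set \<Rightarrow> bool" where
  "induced_connected E C \<longleftrightarrow> C \<noteq> {} \<and>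
     (\<forall>u\<in>C. \<forall>v\<in>C. (u, v) \<in> ({(a, b). {a, b} \<in> E \<and> a \<in> C \<and> b \<in> C})\<^sup>*)"

definition connected_component :: "'a set \<Rightarrow> 'a set set \<Rightarrow> 'a set \<Rightarrow> bool" where
  "connected_component V E C \<longleftrightarrow> C \<subseteq> V \<and> induced_connected E C \<and>
     (\<forall>D. C \<subset> D \<and> D \<subseteq> V \<longrightarrow> \<not> induced_connected E D)"

end

theory Submission
  imports Defs
begin

definition reln :: "'a set set \<Rightarrow> ('a \<times> 'a) set" where
  "reln E = {(a, b). {a, b} \<in> E}"

definition compo :: "'a set set \<Rightarrow> 'a \<Rightarrow> 'a set" where
  "compo E v = {u. (v, u) \<in> (reln E)\<^sup>*}"

lemma reln_sym: "sym (reln E)"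
  by (auto simp: sym_def reln_def insert_commute)

lemma rtr_sym: "(a, b) \<in> (reln E)\<^sup>* \<Longrightarrow> (b, a) \<in> (reln E)\<^sup>*"
  using sym_rtrancl[OF reln_sym[of E]] unfolding sym_def by blast

lemma compo_sub:
  assumes "graph V E" "v \<in> V"
  shows "compo E v \<subseteq> V"
proof
  fix u assume "u \<in> compo E v"
  hence "(v, u) \<in> (reln E)\<^sup>*" by (simp add: compo_def)
  thus "u \<in> V"
  proof (cases rule: rtranclE)
    case base thus ?thesis using assms by simp
  next
    case (step a)
    hence "{a, u} \<in> E" by (simp add: reln_def)
    thus ?thesis using assms by (auto simp: graph_def)
  qed
qed

lemma compo_eq: "(u, w) \<in> (reln E)\<^sup>* \<Longrightarrow> compo E u = compo E w"
proof -
  assume h: "(u, w) \<in> (reln E)\<^sup>*"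
  have "(w, u) \<in> (reln E)\<^sup>*" using rtr_sym[OF h] .
  thus ?thesis unfolding compo_def using h by (blast intro: rtrancl_trans)
qed

lemma path_in_compo:
  assumes "(v, u) \<in> (reln E)\<^sup>*"
  shows "(v, u) \<in> {(a, b). {a, b} \<in> E \<and> a \<in> compo E v \<and> b \<in> compo E v}\<^sup>*"
  using assms
proof (induction rule: rtrancl_induct)
  case base thus ?case by simp
next
  case (step y z)
  have "y \<in> compo E v" using step.hyps(1) by (simp add: compo_def)
  moreover have "z \<in> compo E v" using step.hyps by (simp add: compo_def)
  moreover have "{y, z} \<in> E" using step.hyps(2) by (simp add: reln_def)
  ultimately show ?case using step.IH by (auto intro: rtrancl_into_rtrancl)
qed

lemma compo_cc:
  assumes "graph V E" "v \<in> V"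
  shows "connected_component V E (compo E v)"
proof -
  let ?Rc = "{(a, b). {a, b} \<in> E \<and> a \<in> compo E v \<and> b \<in> compo E v}"
  have symRc: "sym (?Rc\<^sup>*)"
    by (rule sym_rtrancl) (auto simp: sym_def insert_commute)
  have ic: "induced_connected E (compo E v)"
    unfolding induced_connected_def
  proof (intro conjI ballI)
    show "compo E v \<noteq> {}" by (auto simp: compo_def)
  next
    fix u w assume "u \<in> compo E v" "w \<in> compo E v"
    hence "(v, u) \<in> ?Rc\<^sup>*" "(v, w) \<in> ?Rc\<^sup>*"
      using path_in_compo by (auto simp: compo_def)
    hence "(u, v) \<in> ?Rc\<^sup>*" using symRc by (auto simp: sym_def)
    with \<open>(v, w) \<in> ?Rc\<^sup>*\<close> show "(u, w) \<in> ?Rc\<^sup>*" by (meson rtrancl_trans)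
  qed
  have max: "\<not> induced_connected E D" if CD: "compo E v \<subset> D" "D \<subseteq> V" for D
  proof
    assume icD: "induced_connected E D"
    obtain d where d: "d \<in> D" "d \<notin> compo E v" using CD by blast
    have "v \<in> D" using CD by (auto simp: compo_def)
    then have "(v, d) \<in> {(a, b). {a, b} \<in> E \<and> a \<in> D \<and> b \<in> D}\<^sup>*"
      using icD d unfolding induced_connected_def by blast
    moreover have "{(a, b). {a, b} \<in> E \<and> a \<in> D \<and> b \<in> D} \<subseteq> reln E"
      by (auto simp: reln_def)
    ultimately have "(v, d) \<in> (reln E)\<^sup>*" using rtrancl_mono by blast
    thus False using d by (simp add: compo_def)
  qed
  show ?thesis unfolding connected_component_def
    using compo_sub[OF assms] ic max by blast
qed

lemma xorl_comm: "xorl u v = xorl v u"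
proof (induction u arbitrary: v)
  case Nil thus ?case by (cases v) (auto simp: xorl_def)
next
  case (Cons a u) thus ?case by (cases v) (auto simp: xorl_def)
qed

lemma pigeon:
  assumes "finite A" "finite B" "B \<noteq> {}" "\<forall>a\<in>A. f a \<in> B"
  shows "\<exists>b\<in>B. card A \<le> card B * card {a\<in>A. f a = b}"
proof (rule ccontr)
  assume "\<not> ?thesis"
  hence lt: "\<And>b. b \<in> B \<Longrightarrow> card B * card {a\<in>A. f a = b} < card A" by (simp add: not_le)
  have AU: "A = (\<Union>b\<in>B. {a\<in>A. f a = b})" using assms(4) by blast
  have "card (\<Union>b\<in>B. {a\<in>A. f a = b}) \<le> (\<Sum>b\<in>B. card {a\<in>A. f a = b})"
    by (rule card_UN_le[OF assms(2)])
  hence c1: "card A \<le> (\<Sum>b\<in>B. card {a\<in>A. f a = b})" using AU by simp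
  have "(\<Sum>b\<in>B. card B * card {a\<in>A. f a = b}) < (\<Sum>b\<in>B. card A)"
    by (rule sum_strict_mono[OF assms(2) assms(3) lt])
  hence "card B * (\<Sum>b\<in>B. card {a\<in>A. f a = b}) < card B * card A"
    by (simp add: sum_distrib_left)
  hence "(\<Sum>b\<in>B. card {a\<in>A. f a = b}) < card A" by simp
  with c1 show False by simp
qed

lemma matching_exists:
  fixes key :: "nat \<Rightarrow> nat"
  assumes "even m"
    and cls: "\<And>w. w < m \<Longrightarrow> 2 * card {v\<in>{0..<m}. key v = key w} \<le> m"
  shows "\<exists>y. perfect_matching m y \<and> (\<forall>e\<in>y. \<exists>u v. e = {u, v} \<and> key u \<noteq> key v)"
proof -
  define xs where "xs = sort_key key [0..<m]"
  define h where "h = m div 2"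
  have mh: "m = h + h" using assms(1) unfolding h_def by presburger
  have len: "length xs = m" by (simp add: xs_def)
  have dist: "distinct xs" by (simp add: xs_def)
  have setx: "set xs = {0..<m}" by (simp add: xs_def)
  have sorted: "sorted (map key xs)" by (simp add: xs_def)
  have inj: "xs ! i = xs ! j \<longleftrightarrow> i = j" if "i < m" "j < m" for i j
    using nth_eq_iff_index_eq[OF dist] that len by simp
  have diffkey: "key (xs ! i) \<noteq> key (xs ! (i + h))" if "i < h" for i
  proof
    assume eq: "key (xs ! i) = key (xs ! (i + h))"
    have mono: "key (xs ! a) \<le> key (xs ! b)" if "a \<le> b" "b < m" for a b
      using sorted that len by (auto simp: sorted_iff_nth_mono)
    have allk: "key (xs ! j) = key (xs ! i)" if "j \<in> {i..i+h}" for j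
      using mono[of i j] mono[of j "i+h"] that eq \<open>i < h\<close> mh by auto
    have sub: "(\<lambda>j. xs ! j) ` {i..i+h} \<subseteq> {v\<in>{0..<m}. key v = key (xs ! i)}"
    proof (rule image_subsetI)
      fix j assume j: "j \<in> {i..i+h}"
      hence "j < m" using \<open>i < h\<close> mh by auto
      hence "xs ! j \<in> {0..<m}" using setx len nth_mem by metis
      thus "xs ! j \<in> {v\<in>{0..<m}. key v = key (xs ! i)}" using allk[OF j] by simp
    qed
    have "inj_on (\<lambda>j. xs ! j) {i..i+h}"
      using inj \<open>i < h\<close> mh by (auto simp: inj_on_def)
    hence "card ((\<lambda>j. xs ! j) ` {i..i+h}) = h + 1" by (simp add: card_image)
    hence "h + 1 \<le> card {v\<in>{0..<m}. key v = key (xs ! i)}"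
    proof -
      have "card ((\<lambda>j. xs ! j) ` {i..i+h}) \<le> card {v\<in>{0..<m}. key v = key (xs ! i)}"
        by (rule card_mono) (simp, rule sub)
      thus ?thesis using \<open>card ((\<lambda>j. xs ! j) ` {i..i+h}) = h + 1\<close> by simp
    qed
    moreover have "2 * card {v\<in>{0..<m}. key v = key (xs ! i)} \<le> m"
    proof -
      have "i < m" using \<open>i < h\<close> mh by simp
      hence "xs ! i < m" using setx len nth_mem by (metis atLeastLessThan_iff)
      thus ?thesis by (rule cls)
    qed
    ultimately show False using mh by simp
  qed
  define y where "y = (\<lambda>i. {xs ! i, xs ! (i + h)}) ` {0..<h}"
  have pm: "perfect_matching m y"
    unfolding perfect_matching_def
  proof (intro conjI ballI impI)
    fix e assume "e \<in> y"
    then obtain i where i: "i < h" "e = {xs ! i, xs ! (i + h)}" by (auto simp: y_def)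
    have "xs ! i \<noteq> xs ! (i + h)" using inj[of i "i+h"] i mh by simp
    thus "card e = 2" using i by simp
  next
    show "\<Union> y = {0..<m}"
    proof
      show "\<Union> y \<subseteq> {0..<m}"
      proof
        fix w assume "w \<in> \<Union> y"
        then obtain i where i: "i < h" "w = xs ! i \<or> w = xs ! (i + h)" by (auto simp: y_def)
        have "i < m" "i + h < m" using i mh by auto
        thus "w \<in> {0..<m}" using i setx len nth_mem by (metis)
      qed
    next
      show "{0..<m} \<subseteq> \<Union> y"
      proof
        fix w assume "w \<in> {0..<m}"
        then obtain j where j: "j < m" "w = xs ! j" using setx len by (metis in_set_conv_nth)
        show "w \<in> \<Union> y"
        proof (cases "j < h")
          case True thus ?thesis using j by (auto simp: y_def)
        next
          case False
          hence "j - h < h" "j = (j - h) + h" using j mh by auto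
          have e: "j - h + h = j" using False by simp
          have "{xs ! (j - h), xs ! (j - h + h)} \<in> y" unfolding y_def using \<open>j - h < h\<close> by auto
          moreover have "w \<in> {xs ! (j - h), xs ! (j - h + h)}" using j e by simp
          ultimately show ?thesis by blast
        qed
      qed
    qed
  next
    fix e e' assume "e \<in> y" "e' \<in> y" "e \<noteq> e'"
    obtain i where i: "i < h" "e = {xs ! i, xs ! (i + h)}" using \<open>e \<in> y\<close> by (auto simp: y_def)
    obtain i' where i': "i' < h" "e' = {xs ! i', xs ! (i' + h)}" using \<open>e' \<in> y\<close> by (auto simp: y_def)
    have ii: "i \<noteq> i'" using i i' \<open>e \<noteq> e'\<close> by auto
    have "xs ! i \<noteq> xs ! i'" by (subst inj) (use i i' ii mh in auto)
    moreover have "xs ! i \<noteq> xs ! (i' + h)" by (subst inj) (use i i' ii mh in auto)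
    moreover have "xs ! (i + h) \<noteq> xs ! i'" by (subst inj) (use i i' ii mh in auto)
    moreover have "xs ! (i + h) \<noteq> xs ! (i' + h)" by (subst inj) (use i i' ii mh in auto)
    ultimately show "e \<inter> e' = {}" using i i' by auto
  qed
  moreover have "\<forall>e\<in>y. \<exists>u v. e = {u, v} \<and> key u \<noteq> key v"
  proof
    fix e assume "e \<in> y"
    then obtain i where i: "i < h" "e = {xs ! i, xs ! (i + h)}" by (auto simp: y_def)
    thus "\<exists>u v. e = {u, v} \<and> key u \<noteq> key v" using diffkey[OF i(1)] by blast
  qed
  ultimately show ?thesis by blast
qed


theorem corollary1:
  fixes m :: nat
  assumes "m > 0" and "even m"
    and "classical_winning_strategy_exists m"
  shows "\<exists>(V :: nat set) (E :: nat set set) (h :: nat set \<Rightarrow> bool).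
           graph V E \<and> card V = m \<and>
           real (card (colourings V E h)) \<ge> 2 ^ m / 2 ^ Lbits m \<and>
           (\<exists>C. connected_component V E C \<and> real (card C) > real m / 2)"
proof -
  obtain sA sB where
    H1: "\<forall>x. length x = m \<longrightarrow> length (sA x) = Lbits m" and
    H2: "\<forall>y. perfect_matching m y \<longrightarrow> card (fst (sB y)) = 2 \<and> fst (sB y) \<subseteq> {0..<m} \<and> length (snd (sB y)) = Lbits m" and
    H3: "\<forall>x y. length x = m \<longrightarrow> perfect_matching m y \<longrightarrow> wins m x y (sA x) (sB y)"
    using assms(3) unfolding classical_winning_strategy_exists_def by blast
  define L where "L = Lbits m"
  define Xs where "Xs = {x::bool list. set x \<subseteq> UNIV \<and> length x = m}"
  define B where "B = {a::bool list. set a \<subseteq> UNIV \<and> length a = L}"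
  have cXs: "card Xs = 2^m" unfolding Xs_def using card_lists_length_eq[of "UNIV::bool set" m] by simp
  have fXs: "finite Xs" unfolding Xs_def using finite_lists_length_eq[of "UNIV::bool set" m] by simp
  have cB: "card B = 2^L" unfolding B_def using card_lists_length_eq[of "UNIV::bool set" L] by simp
  have fB: "finite B" unfolding B_def using finite_lists_length_eq[of "UNIV::bool set" L] by simp
  have "replicate L False \<in> B" by (simp add: B_def)
  hence neB: "B \<noteq> {}" by blast
  have inB: "\<forall>x\<in>Xs. sA x \<in> B" using H1 unfolding Xs_def B_def L_def by simp
  obtain a0 where "a0 \<in> B" and pg: "card Xs \<le> card B * card {x\<in>Xs. sA x = a0}"
    using pigeon[OF fXs fB neB inB] by blast
  define X where "X = {x\<in>Xs. sA x = a0}"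
  have pgX: "2^m \<le> 2^L * card X" using pg cXs cB by (simp add: X_def)
  have "card X > 0"
  proof (rule ccontr)
    assume "\<not> card X > 0"
    hence "card X = 0" by simp
    with pgX show False by simp
  qed
  hence "X \<noteq> {}" by auto
  then obtain x0 where x0: "x0 \<in> X" by blast
  have lx0: "length x0 = m" "sA x0 = a0" using x0 by (auto simp: X_def Xs_def)
  define E where "E = {fst (sB y) | y. perfect_matching m y}"
  define h where "h = (\<lambda>e::nat set. \<exists>u\<in>e. \<exists>v\<in>e. x0 ! u \<noteq> x0 ! v)"
  define V where "V = {0..<m::nat}"
  have gr: "graph V E" using H2 by (auto simp: graph_def E_def V_def)
  have key: "\<exists>u v. u \<noteq> v \<and> fst (sB y) = {u, v} \<and> (x ! u \<noteq> x ! v) = (x0 ! u \<noteq> x0 ! v)"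
    if x: "x \<in> X" and y: "perfect_matching m y" for x y
  proof -
    have lx: "length x = m" "sA x = a0" using x by (auto simp: X_def Xs_def)
    have "wins m x y a0 (sB y)" using H3 lx y by metis
    then obtain b1 b2 where b: "b1 \<noteq> b2" "fst (sB y) = {b1, b2}"
      "(x ! b1 \<noteq> x ! b2) = dotp (xorl (bin (Lbits m) b1) (bin (Lbits m) b2)) (xorl a0 (snd (sB y)))"
      unfolding wins_def by blast
    have "wins m x0 y a0 (sB y)" using H3 lx0 y by metis
    then obtain c1 c2 where c: "c1 \<noteq> c2" "fst (sB y) = {c1, c2}"
      "(x0 ! c1 \<noteq> x0 ! c2) = dotp (xorl (bin (Lbits m) c1) (bin (Lbits m) c2)) (xorl a0 (snd (sB y)))"
      unfolding wins_def by blast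
    from b(2) c(2) have "(c1 = b1 \<and> c2 = b2) \<or> (c1 = b2 \<and> c2 = b1)" by (auto simp: doubleton_eq_iff)
    hence "(x0 ! b1 \<noteq> x0 ! b2) = dotp (xorl (bin (Lbits m) b1) (bin (Lbits m) b2)) (xorl a0 (snd (sB y)))"
    proof
      assume "c1 = b1 \<and> c2 = b2" thus ?thesis using c by simp
    next
      assume "c1 = b2 \<and> c2 = b1"
      thus ?thesis using c xorl_comm[of "bin (Lbits m) b1" "bin (Lbits m) b2"] by auto
    qed
    thus ?thesis using b by metis
  qed
  define col where "col = (\<lambda>x::bool list. restrict (\<lambda>i. x ! i) V)"
  have colin: "col x \<in> colourings V E h" if xX: "x \<in> X" for x
    unfolding colourings_def colouring_def
  proof (intro CollectI conjI allI impI)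
    show "col x \<in> V \<rightarrow>\<^sub>E UNIV" by (simp add: col_def)
    fix u v assume "{u, v} \<in> E"
    then obtain y where y: "perfect_matching m y" "fst (sB y) = {u, v}" by (auto simp: E_def)
    have uv: "u \<in> V" "v \<in> V" using H2 y by (auto simp: V_def)
    obtain u' v' where "u' \<noteq> v'" "fst (sB y) = {u', v'}" "(x ! u' \<noteq> x ! v') = (x0 ! u' \<noteq> x0 ! v')"
      using key[OF xX y(1)] by blast
    then have "(x ! u \<noteq> x ! v) = (x0 ! u \<noteq> x0 ! v)" using y(2) by (auto simp: doubleton_eq_iff)
    moreover have "h {u, v} = (x0 ! u \<noteq> x0 ! v)" by (auto simp: h_def)
    ultimately show "(col x u \<noteq> col x v) = h {u, v}" using uv by (simp add: col_def)
  qed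
  have injc: "inj_on col X"
  proof (rule inj_onI)
    fix x x' assume xx: "x \<in> X" "x' \<in> X" "col x = col x'"
    then have l: "length x = m" "length x' = m" by (auto simp: X_def Xs_def)
    have nx: "x ! i = x' ! i" if "i < m" for i
      using fun_cong[OF xx(3), of i] that by (simp add: col_def V_def)
    show "x = x'" by (rule nth_equalityI) (use l nx in auto)
  qed
  have fincol: "finite (colourings V E h)"
  proof (rule finite_subset)
    show "colourings V E h \<subseteq> V \<rightarrow>\<^sub>E (UNIV::bool set)" by (auto simp: colourings_def)
    show "finite (V \<rightarrow>\<^sub>E (UNIV::bool set))" by (rule finite_PiE) (auto simp: V_def)
  qed
  have "card X \<le> card (colourings V E h)"
    using card_inj_on_le[OF injc _ fincol] colin by blast
  hence "2^L * card X \<le> 2^L * card (colourings V E h)" by (rule mult_le_mono2)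
  hence ineq: "2^m \<le> 2^L * card (colourings V E h)" using pgX by (rule le_trans[rotated])
  have realineq: "real (card (colourings V E h)) \<ge> 2 ^ m / 2 ^ Lbits m"
  proof -
    have "real (2^m) \<le> real (2^L * card (colourings V E h))" using ineq by (simp only: of_nat_le_iff)
    hence "(2::real)^m \<le> 2^L * real (card (colourings V E h))" by simp
    thus ?thesis by (simp add: L_def pos_divide_le_eq mult.commute)
  qed
  have "\<exists>v\<in>V. 2 * card (compo E v) > m"
  proof (rule ccontr)
    assume "\<not> ?thesis"
    hence small: "\<forall>v\<in>V. 2 * card (compo E v) \<le> m" by auto
    define key where "key = (\<lambda>v. Min (compo E v))"
    have fin: "finite (compo E v)" if "v \<in> V" for v
      using compo_sub[OF gr that] by (rule finite_subset) (simp add: V_def)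
    have keyin: "(v, key v) \<in> (reln E)\<^sup>*" if "v \<in> V" for v
    proof -
      have ne: "compo E v \<noteq> {}" by (auto simp: compo_def)
      have "key v \<in> compo E v" using Min_in[OF fin[OF that] ne] by (simp add: key_def)
      thus ?thesis by (simp add: compo_def)
    qed
    have samekey: "w \<in> compo E v" if "v \<in> V" "w \<in> V" "key v = key w" for v w
    proof -
      have "(v, key v) \<in> (reln E)\<^sup>*" using keyin[OF that(1)] .
      moreover have "(key v, w) \<in> (reln E)\<^sup>*" using rtr_sym[OF keyin[OF that(2)]] that(3) by simp
      ultimately show ?thesis by (simp add: compo_def rtrancl_trans)
    qed
    have cls: "2 * card {u\<in>{0..<m}. key u = key w} \<le> m" if "w < m" for w
    proof -
      have wV: "w \<in> V" using that by (simp add: V_def)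
      have "{u\<in>{0..<m}. key u = key w} \<subseteq> compo E w" using samekey wV by (auto simp: V_def)
      hence "card {u\<in>{0..<m}. key u = key w} \<le> card (compo E w)" using fin[OF wV] by (rule card_mono[rotated])
      thus ?thesis using small wV by fastforce
    qed
    obtain y where y: "perfect_matching m y" "\<forall>e\<in>y. \<exists>u v. e = {u, v} \<and> key u \<noteq> key v"
      using matching_exists[OF assms(2) cls] by blast
    have "wins m x0 y (sA x0) (sB y)" using H3 lx0 y(1) by blast
    hence "fst (sB y) \<in> y" by (simp add: wins_def)
    then obtain u v where uv: "fst (sB y) = {u, v}" "key u \<noteq> key v" using y(2) by blast
    have "{u, v} \<in> E" using y(1) uv(1) unfolding E_def by blast
    hence "(u, v) \<in> (reln E)\<^sup>*" by (auto simp: reln_def)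
    hence "compo E u = compo E v" by (rule compo_eq)
    thus False using uv(2) by (simp add: key_def)
  qed
  then obtain v where v: "v \<in> V" "2 * card (compo E v) > m" by blast
  have cc: "connected_component V E (compo E v)" by (rule compo_cc[OF gr v(1)])
  have "real (card (compo E v)) > real m / 2" using v(2) by linarith
  moreover have "card V = m" by (simp add: V_def)
  ultimately show ?thesis using gr realineq cc by blast
qed

end
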